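(* For every finite set of formulas $T$ and formula $\phi$ of $\mathsf{JRC}$: if $T\models_{\mathsf{JRC}}\phi$, then $T\vdash_{\mathsf{JRC}}\phi$.
   Context: Language of $\mathsf{JRC}$: countable sets $\mathsf{Var}$ (justification variables) and $\mathsf{Prop}$ (atoms). Terms $t ::= x \mid t+t$ ($x\in\mathsf{Var}$); formulas $\phi ::= p \mid {\sim}\phi \mid \phi\wedge\phi \mid \phi\to\phi \mid \phi\rightsquigarrow\phi \mid t{:}\phi$. A Routley relational model is $\mathcal M=(W,W_N,R,R_{Fm},R_{Tm},{*},\mathcal V)$ where $W$ is nonempty, $W_N\subseteq W$ nonempty (normal states); $R\subseteq W\times W\times W$ satisfies: for $w\in W_N$, $Rwvu$ iff $v=u$; $R_{Fm}$ assigns to each formula $\phi$ a relation $R_\phi\subseteq W\times W$; $R_{Tm}$ assigns to each term $t$ a relation $R_t\subseteq W\times W$; ${*}:W\to W$ with $w^{**}=w$; $\mathcal V:\mathsf{Prop}\to\mathcal P(W)$. Truth at every $w\in W$: $p$ iff $w\in\mathcal V(p)$; ${\sim}\phi$ iff $w^*\not\models\phi$; $\phi\wedge\psi$ iff both; $\phi\to\psi$ iff for all $v,u$ with $Rwvu$, $v\models\phi$ implies $u\models\psi$; $\phi\rightsquigarrow\psi$ iff $R_\phi(w)\subseteq[\psi]$; $t{:}\phi$ iff $R_t(w)\subseteq[\phi]$; $[\phi]=\{w\in W:w\models\phi\}$. A $\mathsf{JRC}$-model is a Routley relational model with: (1) $R_\phi(w)\subseteq[\phi]$ for all $w\in W_N$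 and all $\phi$; (2) for all $w\in W$, if $w\in[\phi]$ then $w\in R_\phi(w)$; (3) $R_{s+t}\subseteq R_s\cap R_t$. $T\models_{\mathsf{JRC}}\phi$ iff for every $\mathsf{JRC}$-model and every $w\in W_N$, if all members of $T$ are true at $w$ then $\phi$ is true at $w$. Tableaux: labels are elements of $\{0,1,2,\dots\}\cup\{0^\sharp,1^\sharp,2^\sharp,\dots\}$, with $\bar i=i^\sharp$ and $\overline{i^\sharp}=i$. Nodes have the forms $\phi,+x$; $\phi,-x$; $x\rhd_\phi y$; $x\rhd_t y$; $rxyz$. Rules (applied to a branch; $x,y,z$ arbitrary labels; $j,k$ natural numbers): (T$\sim$) from ${\sim}\phi,+x$ add $\phi,-\bar x$; (F$\sim$) from ${\sim}\phi,-x$ add $\phi,+\bar x$; (T$\wedge$) from $\phi\wedge\psi,+x$ add $\phi,+x$ and $\psi,+x$; (F$\wedge$) from $\phi\wedge\psi,-x$ split into $\phi,-x$ | $\psi,-x$; (T$\to$) from $\phi\to\psi,+x$ and $rxyz$ split into $\phi,-y$ | $\psi,+z$; (F$\to$) from $\phi\to\psi,-x$ add $rxjk$, $\phi,+j$, $\psi,-k$ with $j,k$ new, and $j=k$ if $x=0$; (T$\rightsquigarrow$) from $\phi\rightsquigarrow\psi,+x$ and $x\rhd_\phi y$ add $\psi,+y$; (F$\rightsquigarrow$) for $x\neq0$, from $\phi\rightsquigarrow\psi,-x$ add $x\rhd_\phi j$ and $\psi,-j$, $j$ new; (F$\rightsquigarrow_0$) from $\phi\rightsquigarrow\psi,-0$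 add $0\rhd_\phi j$, $\phi,+j$, $\psi,-j$, $j$ new; (Cut$_r$) if $\phi$ occurs on the branch as the antecedent of a $\rightsquigarrow$-formula and $x$ occurs on the branch, split into $\phi,-x$ | ($\phi,+x$ and $x\rhd_\phi x$); (T:) from $t{:}\phi,+x$ and $x\rhd_t y$ add $\phi,+y$; (F:) from $t{:}\phi,-x$ add $x\rhd_t j$ and $\phi,-j$, $j$ new; ($\rhd_+$) from $x\rhd_{s+t}y$ add $x\rhd_s y$ and $x\rhd_t y$; (Normality) for any $x$ occurring on the branch add $r0xx$. A branch is closed if it contains $\phi,+x$ and $\phi,-x$ for some $\phi,x$; a tableau is closed if all its branches are. $T\vdash_{\mathsf{JRC}}\phi$ iff there is a closed tableau whose initial single branch consists of $\psi,+0$ for each $\psi\in T$ and $\phi,-0$. *)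

theory Defs
  imports Main
begin

datatype tm = TVar nat | Plus tm tm

datatype fm =
    Atom nat
  | Neg fm
  | Conj fm fm
  | Imp fm fm
  | CImp fm fm      \<comment> \<open>the counterfactual-like connective written with a squiggly arrow\<close>
  | Just tm fm

record 'w rmodel =
  W   :: "'w set"
  WN  :: "'w set"
  R   :: "'w \<Rightarrow> 'w \<Rightarrow> 'w \<Rightarrow> bool"
  RF  :: "fm \<Rightarrow> 'w \<Rightarrow> 'w \<Rightarrow> bool"
  RT  :: "tm \<Rightarrow> 'w \<Rightarrow> 'w \<Rightarrow> bool"
  st  :: "'w \<Rightarrow> 'w"
  V   :: "nat \<Rightarrow> 'w set"

fun sat :: "'w rmodel \<Rightarrow> 'w \<Rightarrow> fm \<Rightarrow> bool" where
  "sat M w (Atom p) = (w \<in> V M p)"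
| "sat M w (Neg \<phi>) = (\<not> sat M (st M w) \<phi>)"
| "sat M w (Conj \<phi> \<psi>) = (sat M w \<phi> \<and> sat M w \<psi>)"
| "sat M w (Imp \<phi> \<psi>) = (\<forall>v u. R M w v u \<longrightarrow> sat M v \<phi> \<longrightarrow> sat M u \<psi>)"
| "sat M w (CImp \<phi> \<psi>) = (\<forall>v. RF M \<phi> w v \<longrightarrow> sat M v \<psi>)"
| "sat M w (Just t \<phi>) = (\<forall>v. RT M t w v \<longrightarrow> sat M v \<phi>)"

definition routley_model :: "'w rmodel \<Rightarrow> bool" where
  "routley_model M \<longleftrightarrow>
     W M \<noteq> {} \<and> WN M \<subseteq> W M \<and> WN M \<noteq> {} \<and>
     (\<forall>w v u. R M w v u \<longrightarrow> w \<in> W M \<and> v \<in> W M \<and> u \<in> W M) \<and>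
     (\<forall>w\<in>WN M. \<forall>v\<in>W M. \<forall>u\<in>W M. R M w v u \<longleftrightarrow> v = u) \<and>
     (\<forall>\<phi> w v. RF M \<phi> w v \<longrightarrow> w \<in> W M \<and> v \<in> W M) \<and>
     (\<forall>t w v. RT M t w v \<longrightarrow> w \<in> W M \<and> v \<in> W M) \<and>
     (\<forall>w\<in>W M. st M w \<in> W M \<and> st M (st M w) = w) \<and>
     (\<forall>p. V M p \<subseteq> W M)"

definition jrc_model :: "'w rmodel \<Rightarrow> bool" where
  "jrc_model M \<longleftrightarrow> routley_model M \<and>
     (\<forall>w\<in>WN M. \<forall>\<phi> v. RF M \<phi> w v \<longrightarrow> sat M v \<phi>) \<and>
     (\<forall>w\<in>W M. \<forall>\<phi>. sat M w \<phi> \<longrightarrow> RF M \<phi> w w) \<and>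
     (\<forall>s t w v. RT M (Plus s t) w v \<longrightarrow> RT M s w v \<and> RT M t w v)"

definition entails :: "fm set \<Rightarrow> fm \<Rightarrow> bool" where
  "entails T \<phi> \<longleftrightarrow>
     (\<forall>M :: nat rmodel. jrc_model M \<longrightarrow>
        (\<forall>w\<in>WN M. (\<forall>\<psi>\<in>T. sat M w \<psi>) \<longrightarrow> sat M w \<phi>))"

datatype lbl = L nat | S nat   \<comment> \<open>i and i-sharp\<close>

fun bar :: "lbl \<Rightarrow> lbl" where
  "bar (L i) = S i"
| "bar (S i) = L i"

datatype node =
    TN fm lbl
  | FN fm lbl
  | RelF lbl fm lbl
  | RelT lbl tm lbl
  | R3 lbl lbl lbl

fun node_lbls :: "node \<Rightarrow> lbl set" where
  "node_lbls (TN \<phi> x) = {x}"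
| "node_lbls (FN \<phi> x) = {x}"
| "node_lbls (RelF x \<phi> y) = {x, y}"
| "node_lbls (RelT x t y) = {x, y}"
| "node_lbls (R3 x y z) = {x, y, z}"

definition lbls :: "node set \<Rightarrow> lbl set" where
  "lbls B = (\<Union>n\<in>B. node_lbls n)"

inductive rule1 :: "node set \<Rightarrow> node set \<Rightarrow> bool" where
  T_neg: "TN (Neg \<phi>) x \<in> B \<Longrightarrow> rule1 B {FN \<phi> (bar x)}"
| F_neg: "FN (Neg \<phi>) x \<in> B \<Longrightarrow> rule1 B {TN \<phi> (bar x)}"
| T_conj: "TN (Conj \<phi> \<psi>) x \<in> B \<Longrightarrow> rule1 B {TN \<phi> x, TN \<psi> x}"
| F_imp: "FN (Imp \<phi> \<psi>) x \<in> B \<Longrightarrow> L j \<notin> lbls B \<Longrightarrow> L k \<notin> lbls B \<Longrightarrow>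
          (x = L 0 \<longrightarrow> j = k) \<Longrightarrow> (x \<noteq> L 0 \<longrightarrow> j \<noteq> k) \<Longrightarrow>
          rule1 B {R3 x (L j) (L k), TN \<phi> (L j), FN \<psi> (L k)}"
| T_cimp: "TN (CImp \<phi> \<psi>) x \<in> B \<Longrightarrow> RelF x \<phi> y \<in> B \<Longrightarrow> rule1 B {TN \<psi> y}"
| F_cimp: "x \<noteq> L 0 \<Longrightarrow> FN (CImp \<phi> \<psi>) x \<in> B \<Longrightarrow> L j \<notin> lbls B \<Longrightarrow>
          rule1 B {RelF x \<phi> (L j), FN \<psi> (L j)}"
| F_cimp0: "FN (CImp \<phi> \<psi>) (L 0) \<in> B \<Longrightarrow> L j \<notin> lbls B \<Longrightarrow>
          rule1 B {RelF (L 0) \<phi> (L j), TN \<phi> (L j), FN \<psi> (L j)}"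
| T_just: "TN (Just t \<phi>) x \<in> B \<Longrightarrow> RelT x t y \<in> B \<Longrightarrow> rule1 B {TN \<phi> y}"
| F_just: "FN (Just t \<phi>) x \<in> B \<Longrightarrow> L j \<notin> lbls B \<Longrightarrow>
          rule1 B {RelT x t (L j), FN \<phi> (L j)}"
| Rel_plus: "RelT x (Plus s t) y \<in> B \<Longrightarrow> rule1 B {RelT x s y, RelT x t y}"
| Normality: "x \<in> lbls B \<Longrightarrow> rule1 B {R3 (L 0) x x}"

inductive rule2 :: "node set \<Rightarrow> node set \<Rightarrow> node set \<Rightarrow> bool" where
  F_conj: "FN (Conj \<phi> \<psi>) x \<in> B \<Longrightarrow> rule2 B {FN \<phi> x} {FN \<psi> x}"
| T_imp: "TN (Imp \<phi> \<psi>) x \<in> B \<Longrightarrow> R3 x y z \<in> B \<Longrightarrow> rule2 B {FN \<phi> y} {TN \<psi> z}"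
| Cut_r: "(TN (CImp \<phi> \<psi>) y \<in> B \<or> FN (CImp \<phi> \<psi>) y \<in> B) \<Longrightarrow> x \<in> lbls B \<Longrightarrow>
          rule2 B {FN \<phi> x} {TN \<phi> x, RelF x \<phi> x}"

text \<open>A branch B can be closed: there is a finite tableau rooted at branch B
  all of whose branches are closed.\<close>

inductive closable :: "node set \<Rightarrow> bool" where
  closed: "TN \<phi> x \<in> B \<Longrightarrow> FN \<phi> x \<in> B \<Longrightarrow> closable B"
| ext1: "rule1 B E \<Longrightarrow> closable (B \<union> E) \<Longrightarrow> closable B"
| ext2: "rule2 B E1 E2 \<Longrightarrow> closable (B \<union> E1) \<Longrightarrow> closable (B \<union> E2) \<Longrightarrow> closable B"

definition derives :: "fm set \<Rightarrow> fm \<Rightarrow> bool" where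
  "derives T \<phi> \<longleftrightarrow> closable ((\<lambda>\<psi>. TN \<psi> (L 0)) ` T \<union> {FN \<phi> (L 0)})"

end

theory Submission
  imports Defs "HOL-Library.Countable" "HOL-Library.Nat_Bijection"
begin

instance tm :: countable by countable_datatype
instance fm :: countable by countable_datatype
instance lbl :: countable by countable_datatype

datatype task = TNeg fm lbl | FNeg fm lbl | TConj fm fm lbl | FConj fm fm lbl
 | TImp fm fm lbl lbl lbl | FImp fm fm lbl | TCImp fm fm lbl lbl | FCImp fm fm lbl
 | TJust tm fm lbl lbl | FJust tm fm lbl | RPlus lbl tm tm lbl | Norm lbl | Cut fm lbl

instance task :: countable by countable_datatype

fun appl :: "node set \<Rightarrow> task \<Rightarrow> bool" where
  "appl B (TNeg \<phi> x) = (TN (Neg \<phi>) x \<in> B)"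
| "appl B (FNeg \<phi> x) = (FN (Neg \<phi>) x \<in> B)"
| "appl B (TConj \<phi> \<psi> x) = (TN (Conj \<phi> \<psi>) x \<in> B)"
| "appl B (FConj \<phi> \<psi> x) = (FN (Conj \<phi> \<psi>) x \<in> B)"
| "appl B (TImp \<phi> \<psi> x y z) = (TN (Imp \<phi> \<psi>) x \<in> B \<and> R3 x y z \<in> B)"
| "appl B (FImp \<phi> \<psi> x) = (FN (Imp \<phi> \<psi>) x \<in> B)"
| "appl B (TCImp \<phi> \<psi> x y) = (TN (CImp \<phi> \<psi>) x \<in> B \<and> RelF x \<phi> y \<in> B)"
| "appl B (FCImp \<phi> \<psi> x) = (FN (CImp \<phi> \<psi>) x \<in> B)"
| "appl B (TJust t \<phi> x y) = (TN (Just t \<phi>) x \<in> B \<and> RelT x t y \<in> B)"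
| "appl B (FJust t \<phi> x) = (FN (Just t \<phi>) x \<in> B)"
| "appl B (RPlus x s t y) = (RelT x (Plus s t) y \<in> B)"
| "appl B (Norm x) = (x \<in> lbls B)"
| "appl B (Cut \<phi> x) = ((\<exists>\<psi> y. TN (CImp \<phi> \<psi>) y \<in> B \<or> FN (CImp \<phi> \<psi>) y \<in> B) \<and> x \<in> lbls B)"

fun dn :: "node set \<Rightarrow> task \<Rightarrow> bool" where
  "dn B (TNeg \<phi> x) = (FN \<phi> (bar x) \<in> B)"
| "dn B (FNeg \<phi> x) = (TN \<phi> (bar x) \<in> B)"
| "dn B (TConj \<phi> \<psi> x) = (TN \<phi> x \<in> B \<and> TN \<psi> x \<in> B)"
| "dn B (FConj \<phi> \<psi> x) = (FN \<phi> x \<in> B \<or> FN \<psi> x \<in> B)"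
| "dn B (TImp \<phi> \<psi> x y z) = (FN \<phi> y \<in> B \<or> TN \<psi> z \<in> B)"
| "dn B (FImp \<phi> \<psi> x) = (\<exists>j k. R3 x (L j) (L k) \<in> B \<and> TN \<phi> (L j) \<in> B \<and> FN \<psi> (L k) \<in> B \<and> (x = L 0 \<longrightarrow> j = k))"
| "dn B (TCImp \<phi> \<psi> x y) = (TN \<psi> y \<in> B)"
| "dn B (FCImp \<phi> \<psi> x) = (\<exists>j. RelF x \<phi> (L j) \<in> B \<and> FN \<psi> (L j) \<in> B)"
| "dn B (TJust t \<phi> x y) = (TN \<phi> y \<in> B)"
| "dn B (FJust t \<phi> x) = (\<exists>j. RelT x t (L j) \<in> B \<and> FN \<phi> (L j) \<in> B)"
| "dn B (RPlus x s t y) = (RelT x s y \<in> B \<and> RelT x t y \<in> B)"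
| "dn B (Norm x) = (R3 (L 0) x x \<in> B)"
| "dn B (Cut \<phi> x) = (FN \<phi> x \<in> B \<or> (TN \<phi> x \<in> B \<and> RelF x \<phi> x \<in> B))"

lemma lbls_union[simp]: "lbls (A \<union> B) = lbls A \<union> lbls B"
  unfolding lbls_def by auto

lemma lbls_mono: "A \<subseteq> B \<Longrightarrow> lbls A \<subseteq> lbls B"
  unfolding lbls_def by auto

lemma node_lbls_fin[simp]: "finite (node_lbls n)"
  by (cases n) auto

lemma finite_lbls: "finite B \<Longrightarrow> finite (lbls B)"
  unfolding lbls_def by auto

lemma in_lbls: "n \<in> B \<Longrightarrow> x \<in> node_lbls n \<Longrightarrow> x \<in> lbls B"
  unfolding lbls_def by auto

lemma appl_mono: "appl A t \<Longrightarrow> A \<subseteq> B \<Longrightarrow> appl B t"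
  by (cases t) (auto dest: lbls_mono)

lemma dn_mono: "dn A t \<Longrightarrow> A \<subseteq> B \<Longrightarrow> dn B t"
  by (cases t) auto

lemma appl_fin: "appl B t \<Longrightarrow> \<exists>N. finite N \<and> N \<subseteq> B \<and> appl N t"
proof (cases t)
  case (Norm x)
  assume "appl B t"
  then obtain n where "n \<in> B" "x \<in> node_lbls n" using Norm by (auto simp: lbls_def)
  then show ?thesis using Norm by (intro exI[of _ "{n}"]) (auto simp: lbls_def)
next
  case (Cut \<phi> x)
  assume "appl B t"
  then obtain n1 n where "n1 \<in> B" "\<exists>\<psi> y. n1 = TN (CImp \<phi> \<psi>) y \<or> n1 = FN (CImp \<phi> \<psi>) y"
    "n \<in> B" "x \<in> node_lbls n" using Cut by (auto simp: lbls_def)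
  then show ?thesis using Cut by (intro exI[of _ "{n1, n}"]) (auto simp: lbls_def)
next
  case (TImp \<phi> \<psi> x y z)
  assume "appl B t" thus ?thesis using TImp by (intro exI[of _ "{TN (Imp \<phi> \<psi>) x, R3 x y z}"]) auto
next
  case (TCImp \<phi> \<psi> x y)
  assume "appl B t" thus ?thesis using TCImp by (intro exI[of _ "{TN (CImp \<phi> \<psi>) x, RelF x \<phi> y}"]) auto
next
  case (TJust s \<phi> x y)
  assume "appl B t" thus ?thesis using TJust by (intro exI[of _ "{TN (Just s \<phi>) x, RelT x s y}"]) auto
qed (auto intro!: exI[where x="{_}"])

definition Inv :: "node set \<Rightarrow> bool" where
  "Inv B \<longleftrightarrow> (\<forall>\<phi> v. RelF (L 0) \<phi> v \<in> B \<longrightarrow> TN \<phi> v \<in> B)"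

definition ok :: "node set \<Rightarrow> bool" where
  "ok B \<longleftrightarrow> finite B \<and> \<not> closable B \<and> Inv B"

lemma ok_ext1:
  assumes "ok B" "rule1 B E" "finite E" "\<forall>\<phi> v. RelF (L 0) \<phi> v \<in> E \<longrightarrow> TN \<phi> v \<in> B \<union> E"
  shows "ok (B \<union> E)"
  using assms closable.ext1 unfolding ok_def Inv_def by blast

lemma ok_ext2:
  assumes "ok B" "rule2 B E1 E2" "finite E1" "finite E2"
    "\<forall>\<phi> v. RelF (L 0) \<phi> v \<in> E1 \<longrightarrow> TN \<phi> v \<in> B \<union> E1"
    "\<forall>\<phi> v. RelF (L 0) \<phi> v \<in> E2 \<longrightarrow> TN \<phi> v \<in> B \<union> E2"
  shows "ok (B \<union> E1) \<or> ok (B \<union> E2)"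
  using assms closable.ext2 unfolding ok_def Inv_def by blast

lemma fresh1: "finite B \<Longrightarrow> \<exists>j. L j \<notin> lbls B"
proof -
  assume "finite B"
  hence "finite (L -` lbls B)" by (intro finite_vimageI finite_lbls) (auto simp: inj_def)
  then obtain j where "j \<notin> L -` lbls B" using ex_new_if_finite infinite_UNIV_nat by blast
  thus ?thesis by auto
qed

lemma fresh2: "finite B \<Longrightarrow> \<exists>j k. L j \<notin> lbls B \<and> L k \<notin> lbls B \<and> j \<noteq> k"
proof -
  assume "finite B"
  hence "finite (insert 0 (L -` lbls B))" by (intro finite_insert[THEN iffD2] finite_vimageI finite_lbls) (auto simp: inj_def)
  hence f: "finite (L -` lbls B)" by simp
  then obtain j where j: "j \<notin> L -` lbls B" using ex_new_if_finite infinite_UNIV_nat by blast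
  from f have "finite (insert j (L -` lbls B))" by simp
  then obtain k where "k \<notin> insert j (L -` lbls B)" using ex_new_if_finite infinite_UNIV_nat by blast
  with j show ?thesis by auto
qed

lemma step_ex:
  assumes ok: "ok B" and ap: "appl B t"
  shows "\<exists>B'. B \<subseteq> B' \<and> ok B' \<and> dn B' t"
proof -
  have fin: "finite B" using ok by (simp add: ok_def)
  show ?thesis
  proof (cases t)
    case (TNeg \<phi> x)
    hence "rule1 B {FN \<phi> (bar x)}" using ap by (auto intro: rule1.intros)
    hence "ok (B \<union> {FN \<phi> (bar x)})" using ok by (intro ok_ext1) auto
    thus ?thesis using TNeg by (intro exI[of _ "B \<union> {FN \<phi> (bar x)}"]) auto
  next
    case (FNeg \<phi> x)
    hence "rule1 B {TN \<phi> (bar x)}" using ap by (auto intro: rule1.intros)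
    hence "ok (B \<union> {TN \<phi> (bar x)})" using ok by (intro ok_ext1) auto
    thus ?thesis using FNeg by (intro exI[of _ "B \<union> {TN \<phi> (bar x)}"]) auto
  next
    case (TConj \<phi> \<psi> x)
    hence "rule1 B {TN \<phi> x, TN \<psi> x}" using ap by (auto intro: rule1.intros)
    hence "ok (B \<union> {TN \<phi> x, TN \<psi> x})" using ok by (intro ok_ext1) auto
    thus ?thesis using TConj by (intro exI[of _ "B \<union> {TN \<phi> x, TN \<psi> x}"]) auto
  next
    case (FConj \<phi> \<psi> x)
    hence "rule2 B {FN \<phi> x} {FN \<psi> x}" using ap by (auto intro: rule2.intros)
    hence "ok (B \<union> {FN \<phi> x}) \<or> ok (B \<union> {FN \<psi> x})" using ok by (intro ok_ext2) auto
    thus ?thesis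
    proof
      assume "ok (B \<union> {FN \<phi> x})" thus ?thesis using FConj by (intro exI[of _ "B \<union> {FN \<phi> x}"]) auto
    next
      assume "ok (B \<union> {FN \<psi> x})" thus ?thesis using FConj by (intro exI[of _ "B \<union> {FN \<psi> x}"]) auto
    qed
  next
    case (TImp \<phi> \<psi> x y z)
    hence "rule2 B {FN \<phi> y} {TN \<psi> z}" using ap by (auto intro: rule2.intros)
    hence "ok (B \<union> {FN \<phi> y}) \<or> ok (B \<union> {TN \<psi> z})" using ok by (intro ok_ext2) auto
    thus ?thesis
    proof
      assume "ok (B \<union> {FN \<phi> y})" thus ?thesis using TImp by (intro exI[of _ "B \<union> {FN \<phi> y}"]) auto
    next
      assume "ok (B \<union> {TN \<psi> z})" thus ?thesis using TImp by (intro exI[of _ "B \<union> {TN \<psi> z}"]) auto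
    qed
  next
    case (FImp \<phi> \<psi> x)
    show ?thesis
    proof (cases "x = L 0")
      case True
      obtain j where j: "L j \<notin> lbls B" using fresh1[OF fin] by blast
      let ?E = "{R3 x (L j) (L j), TN \<phi> (L j), FN \<psi> (L j)}"
      have "rule1 B ?E" using ap FImp True j by (auto intro: rule1.F_imp)
      hence "ok (B \<union> ?E)" using ok by (intro ok_ext1) auto
      thus ?thesis using FImp by (intro exI[of _ "B \<union> ?E"]) auto
    next
      case False
      obtain j k where j: "L j \<notin> lbls B" "L k \<notin> lbls B" "j \<noteq> k" using fresh2[OF fin] by blast
      let ?E = "{R3 x (L j) (L k), TN \<phi> (L j), FN \<psi> (L k)}"
      have "rule1 B ?E" using ap FImp False j by (auto intro: rule1.F_imp)
      hence "ok (B \<union> ?E)" using ok by (intro ok_ext1) auto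
      thus ?thesis using FImp False by (intro exI[of _ "B \<union> ?E"]) auto
    qed
  next
    case (TCImp \<phi> \<psi> x y)
    hence "rule1 B {TN \<psi> y}" using ap by (auto intro: rule1.intros)
    hence "ok (B \<union> {TN \<psi> y})" using ok by (intro ok_ext1) auto
    thus ?thesis using TCImp by (intro exI[of _ "B \<union> {TN \<psi> y}"]) auto
  next
    case (FCImp \<phi> \<psi> x)
    obtain j where j: "L j \<notin> lbls B" using fresh1[OF fin] by blast
    show ?thesis
    proof (cases "x = L 0")
      case True
      let ?E = "{RelF (L 0) \<phi> (L j), TN \<phi> (L j), FN \<psi> (L j)}"
      have "rule1 B ?E" using ap FCImp True j by (auto intro: rule1.F_cimp0)
      hence "ok (B \<union> ?E)" using ok by (intro ok_ext1) auto
      thus ?thesis using FCImp True by (intro exI[of _ "B \<union> ?E"]) auto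
    next
      case False
      let ?E = "{RelF x \<phi> (L j), FN \<psi> (L j)}"
      have "rule1 B ?E" using ap FCImp False j by (auto intro: rule1.F_cimp)
      hence "ok (B \<union> ?E)" using ok False by (intro ok_ext1) auto
      thus ?thesis using FCImp by (intro exI[of _ "B \<union> ?E"]) auto
    qed
  next
    case (TJust t \<phi> x y)
    hence "rule1 B {TN \<phi> y}" using ap by (auto intro: rule1.intros)
    hence "ok (B \<union> {TN \<phi> y})" using ok by (intro ok_ext1) auto
    thus ?thesis using TJust by (intro exI[of _ "B \<union> {TN \<phi> y}"]) auto
  next
    case (FJust s \<phi> x)
    obtain j where j: "L j \<notin> lbls B" using fresh1[OF fin] by blast
    let ?E = "{RelT x s (L j), FN \<phi> (L j)}"
    have "rule1 B ?E" using ap FJust j by (auto intro: rule1.F_just)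
    hence "ok (B \<union> ?E)" using ok by (intro ok_ext1) auto
    thus ?thesis using FJust by (intro exI[of _ "B \<union> ?E"]) auto
  next
    case (RPlus x s u y)
    hence "rule1 B {RelT x s y, RelT x u y}" using ap by (auto intro: rule1.intros)
    hence "ok (B \<union> {RelT x s y, RelT x u y})" using ok by (intro ok_ext1) auto
    thus ?thesis using RPlus by (intro exI[of _ "B \<union> {RelT x s y, RelT x u y}"]) auto
  next
    case (Norm x)
    hence "rule1 B {R3 (L 0) x x}" using ap by (auto intro: rule1.intros)
    hence "ok (B \<union> {R3 (L 0) x x})" using ok by (intro ok_ext1) auto
    thus ?thesis using Norm by (intro exI[of _ "B \<union> {R3 (L 0) x x}"]) auto
  next
    case (Cut \<phi> x)
    hence "rule2 B {FN \<phi> x} {TN \<phi> x, RelF x \<phi> x}" using ap by (auto intro: rule2.intros)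
    hence "ok (B \<union> {FN \<phi> x}) \<or> ok (B \<union> {TN \<phi> x, RelF x \<phi> x})" using ok by (intro ok_ext2) auto
    thus ?thesis
    proof
      assume "ok (B \<union> {FN \<phi> x})" thus ?thesis using Cut by (intro exI[of _ "B \<union> {FN \<phi> x}"]) auto
    next
      assume "ok (B \<union> {TN \<phi> x, RelF x \<phi> x})" thus ?thesis using Cut by (intro exI[of _ "B \<union> {TN \<phi> x, RelF x \<phi> x}"]) auto
    qed
  qed
qed


definition step :: "node set \<Rightarrow> task \<Rightarrow> node set" where
  "step B t = (if appl B t then (SOME B'. B \<subseteq> B' \<and> ok B' \<and> dn B' t) else B)"

lemma step_ok:
  assumes "ok B"
  shows "B \<subseteq> step B t \<and> ok (step B t) \<and> (appl B t \<longrightarrow> dn (step B t) t)"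
proof (cases "appl B t")
  case True
  then show ?thesis using someI_ex[OF step_ex[OF assms True]] by (simp add: step_def)
qed (use assms in \<open>simp add: step_def\<close>)

primrec chain :: "node set \<Rightarrow> nat \<Rightarrow> node set" where
  "chain B0 0 = B0"
| "chain B0 (Suc n) = step (chain B0 n) (from_nat (fst (prod_decode n)))"

lemma chain_ok: "ok B0 \<Longrightarrow> ok (chain B0 n)"
  by (induction n) (auto simp: step_ok)

lemma chain_Suc: "ok B0 \<Longrightarrow> chain B0 n \<subseteq> chain B0 (Suc n)"
  using step_ok[OF chain_ok] by simp

lemma chain_mono: "ok B0 \<Longrightarrow> m \<le> n \<Longrightarrow> chain B0 m \<subseteq> chain B0 n"
  by (erule dec_induct) (use chain_Suc in blast)+

definition lim :: "node set \<Rightarrow> node set" where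
  "lim B0 = (\<Union>n. chain B0 n)"

lemma fin_in_chain:
  assumes "ok B0" "finite N"
  shows "N \<subseteq> lim B0 \<Longrightarrow> \<exists>n. N \<subseteq> chain B0 n"
  using assms(2)
proof (induction N rule: finite_induct)
  case empty then show ?case by auto
next
  case (insert x N)
  then obtain n where n: "N \<subseteq> chain B0 n" by auto
  from insert obtain m where m: "x \<in> chain B0 m" by (auto simp: lim_def)
  have "N \<subseteq> chain B0 (max n m)" "x \<in> chain B0 (max n m)"
    using chain_mono[OF assms(1), of n "max n m"] chain_mono[OF assms(1), of m "max n m"] n m by auto
  thus ?case by blast
qed

lemma lim_sat:
  assumes ok: "ok B0" and ap: "appl (lim B0) t"
  shows "dn (lim B0) t"
proof -
  obtain N where N: "finite N" "N \<subseteq> lim B0" "appl N t" using appl_fin[OF ap] by blast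
  obtain n where n: "N \<subseteq> chain B0 n" using fin_in_chain[OF ok N(1,2)] by blast
  define m where "m = prod_encode (to_nat t, n)"
  have "n \<le> m" unfolding m_def by (rule le_prod_encode_2)
  hence "appl (chain B0 m) t" using appl_mono[OF N(3)] n chain_mono[OF ok] by blast
  moreover have "chain B0 (Suc m) = step (chain B0 m) t" by (simp add: m_def)
  ultimately have "dn (chain B0 (Suc m)) t" using step_ok[OF chain_ok[OF ok]] by simp
  moreover have "chain B0 (Suc m) \<subseteq> lim B0" unfolding lim_def by (rule UN_upper) simp
  ultimately show ?thesis by (rule dn_mono)
qed

lemma lim_noclash:
  assumes ok: "ok B0" shows "\<not> (TN \<phi> x \<in> lim B0 \<and> FN \<phi> x \<in> lim B0)"
proof
  assume "TN \<phi> x \<in> lim B0 \<and> FN \<phi> x \<in> lim B0"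
  then obtain n where "{TN \<phi> x, FN \<phi> x} \<subseteq> chain B0 n" using fin_in_chain[OF ok, of "{TN \<phi> x, FN \<phi> x}"] by auto
  hence "closable (chain B0 n)" by (auto intro: closable.closed)
  thus False using chain_ok[OF ok] by (simp add: ok_def)
qed

lemma lim_Inv: assumes ok: "ok B0" shows "Inv (lim B0)"
  using chain_ok[OF ok] unfolding Inv_def ok_def lim_def by blast

lemma lim_sup: "B0 \<subseteq> lim B0"
proof
  fix x assume "x \<in> B0" thus "x \<in> lim B0" unfolding lim_def by (intro UN_I[of 0]) auto
qed

definition hint :: "node set \<Rightarrow> bool" where
  "hint B \<longleftrightarrow> L 0 \<in> lbls B \<and> (\<forall>\<phi> x. \<not> (TN \<phi> x \<in> B \<and> FN \<phi> x \<in> B)) \<and> Inv B \<and> (\<forall>t. appl B t \<longrightarrow> dn B t)"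

lemma lim_hint: "ok B0 \<Longrightarrow> L 0 \<in> lbls B0 \<Longrightarrow> hint (lim B0)"
  unfolding hint_def using lim_sat lim_noclash lim_Inv lbls_mono[OF lim_sup] by blast


fun enc :: "lbl \<Rightarrow> nat" where
  "enc (L i) = 2 * i"
| "enc (S i) = 2 * i + 1"

definition dec :: "nat \<Rightarrow> lbl" where
  "dec n = (if even n then L (n div 2) else S (n div 2))"

lemma dec_enc[simp]: "dec (enc x) = x"
  by (cases x) (auto simp: dec_def)

lemma enc_dec[simp]: "enc (dec n) = n"
  by (auto simp: dec_def)

lemma dec_L[simp]: "dec (2 * j) = L j"
  by (simp add: dec_def)

lemma dec_S[simp]: "dec (2 * j + 1) = S j"
  by (simp add: dec_def)

lemma dec_0[simp]: "dec 0 = L 0"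
  by (simp add: dec_def)

lemma bar_bar[simp]: "bar (bar x) = x"
  by (cases x) auto

definition inW :: "node set \<Rightarrow> lbl \<Rightarrow> bool" where
  "inW B x \<longleftrightarrow> x \<in> lbls B \<or> bar x \<in> lbls B"

definition rw :: "node set \<Rightarrow> lbl \<Rightarrow> lbl" where
  "rw B x = (if x \<in> lbls B then x else bar x)"

lemma inW_rw: "inW B x \<Longrightarrow> rw B x \<in> lbls B"
  by (auto simp: inW_def rw_def)

lemma inW_rw': "inW B x \<Longrightarrow> inW B (rw B x)"
  by (auto simp: inW_def rw_def)

lemma rw_rw: "inW B x \<Longrightarrow> rw B (rw B x) = rw B x"
  by (auto simp: inW_def rw_def)

lemma inW_bar: "inW B (bar x) = inW B x"
  by (auto simp: inW_def)

definition Rw :: "node set \<Rightarrow> nat \<Rightarrow> nat \<Rightarrow> nat \<Rightarrow> bool" where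
  "Rw B w v u \<longleftrightarrow> inW B (dec w) \<and> (if rw B (dec w) = L 0 then inW B (dec v) \<and> v = u
      else R3 (rw B (dec w)) (dec v) (dec u) \<in> B)"

definition RTw :: "node set \<Rightarrow> tm \<Rightarrow> nat \<Rightarrow> nat \<Rightarrow> bool" where
  "RTw B t w v \<longleftrightarrow> inW B (dec w) \<and> RelT (rw B (dec w)) t (dec v) \<in> B"

definition RFw :: "node set \<Rightarrow> fm \<Rightarrow> nat \<Rightarrow> nat \<Rightarrow> bool" where
  "RFw B \<phi> w v \<longleftrightarrow> inW B (dec w) \<and> RelF (rw B (dec w)) \<phi> (dec v) \<in> B"

definition Val :: "node set \<Rightarrow> nat \<Rightarrow> nat \<Rightarrow> bool" where
  "Val B p w \<longleftrightarrow> inW B (dec w) \<and> TN (Atom p) (rw B (dec w)) \<in> B"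

definition stw :: "nat \<Rightarrow> nat" where
  "stw w = enc (bar (dec w))"

fun f :: "node set \<Rightarrow> fm \<Rightarrow> nat \<Rightarrow> bool" where
  "f B (Atom p) w = Val B p w"
| "f B (Neg \<phi>) w = (\<not> f B \<phi> (stw w))"
| "f B (Conj \<phi> \<psi>) w = (f B \<phi> w \<and> f B \<psi> w)"
| "f B (Imp \<phi> \<psi>) w = (\<forall>v u. Rw B w v u \<longrightarrow> f B \<phi> v \<longrightarrow> f B \<psi> u)"
| "f B (CImp \<phi> \<psi>) w = (\<forall>v. (RFw B \<phi> w v \<or> (v = w \<and> inW B (dec w) \<and> f B \<phi> w)) \<longrightarrow> f B \<psi> v)"
| "f B (Just t \<phi>) w = (\<forall>v. RTw B t w v \<longrightarrow> f B \<phi> v)"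

definition mdl :: "node set \<Rightarrow> nat rmodel" where
  "mdl B = \<lparr>W = {w. inW B (dec w)}, WN = {enc (L 0)}, R = Rw B,
     RF = (\<lambda>\<phi> w v. RFw B \<phi> w v \<or> (v = w \<and> inW B (dec w) \<and> f B \<phi> w)),
     RT = RTw B, st = stw, V = (\<lambda>p. {w. Val B p w})\<rparr>"

lemma sat_mdl: "sat (mdl B) w \<phi> = f B \<phi> w"
  by (induction \<phi> arbitrary: w) (auto simp: mdl_def)

lemma copy:
  assumes "inW B (dec w)"
  shows "f B \<phi> w = f B \<phi> (enc (rw B (dec w)))"
  using assms
proof (induction \<phi> arbitrary: w)
  case (Atom p)
  then show ?case by (simp add: Val_def inW_rw' rw_rw)
next
  case (Neg \<phi>)
  show ?case
  proof (cases "dec w \<in> lbls B")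
    case True then show ?thesis by (simp add: rw_def)
  next
    case False
    hence r: "rw B (dec w) = bar (dec w)" by (simp add: rw_def)
    have "f B \<phi> w = f B \<phi> (enc (bar (dec w)))" using Neg r by simp
    thus ?thesis using r by (simp add: stw_def)
  qed
next
  case (Conj \<phi> \<psi>)
  then show ?case by simp
next
  case (Imp \<phi> \<psi>)
  have "Rw B w = Rw B (enc (rw B (dec w)))"
    using Imp.prems by (auto simp: Rw_def inW_rw' rw_rw fun_eq_iff)
  thus ?case by simp
next
  case (CImp \<phi> \<psi>)
  have e: "RFw B \<phi> w = RFw B \<phi> (enc (rw B (dec w)))"
    using CImp.prems by (auto simp: RFw_def inW_rw' rw_rw fun_eq_iff)
  have i: "inW B (dec (enc (rw B (dec w))))" using CImp.prems by (simp add: inW_rw')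
  let ?w' = "enc (rw B (dec w))"
  have i1: "f B \<phi> w = f B \<phi> ?w'" and i2: "f B \<psi> w = f B \<psi> ?w'"
    using CImp.IH CImp.prems by blast+
  show ?case unfolding f.simps e
  proof (intro iffI allI impI)
    fix v assume A: "\<forall>v. RFw B \<phi> ?w' v \<or> v = w \<and> inW B (dec w) \<and> f B \<phi> w \<longrightarrow> f B \<psi> v"
      and v: "RFw B \<phi> ?w' v \<or> v = ?w' \<and> inW B (dec ?w') \<and> f B \<phi> ?w'"
    show "f B \<psi> v"
    proof (cases "RFw B \<phi> ?w' v")
      case True thus ?thesis using A by blast
    next
      case False
      hence "v = ?w'" "f B \<phi> w" using v i1 by auto
      moreover have "f B \<psi> w" using A CImp.prems \<open>f B \<phi> w\<close> by blast
      ultimately show ?thesis using i2 by simp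
    qed
  next
    fix v assume A: "\<forall>v. RFw B \<phi> ?w' v \<or> v = ?w' \<and> inW B (dec ?w') \<and> f B \<phi> ?w' \<longrightarrow> f B \<psi> v"
      and v: "RFw B \<phi> ?w' v \<or> v = w \<and> inW B (dec w) \<and> f B \<phi> w"
    show "f B \<psi> v"
    proof (cases "RFw B \<phi> ?w' v")
      case True thus ?thesis using A by blast
    next
      case False
      hence "v = w" "f B \<phi> ?w'" using v i1 by auto
      moreover have "f B \<psi> ?w'" using A i \<open>f B \<phi> ?w'\<close> by blast
      ultimately show ?thesis using i2 by simp
    qed
  qed
next
  case (Just t \<phi>)
  have "RTw B t w = RTw B t (enc (rw B (dec w)))"
    using Just.prems by (auto simp: RTw_def inW_rw' rw_rw fun_eq_iff)
  thus ?case by simp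
qed

lemma hint_appl: "hint B \<Longrightarrow> appl B t \<Longrightarrow> dn B t"
  by (simp add: hint_def)

lemma node_in: "TN \<phi> x \<in> B \<Longrightarrow> x \<in> lbls B" "FN \<phi> x \<in> B \<Longrightarrow> x \<in> lbls B"
  by (auto intro: in_lbls)

lemma truth:
  assumes h: "hint B"
  shows "(TN \<phi> x \<in> B \<longrightarrow> f B \<phi> (enc x)) \<and> (FN \<phi> x \<in> B \<longrightarrow> \<not> f B \<phi> (enc x))"
proof (induction \<phi> arbitrary: x)
  case (Atom p)
  have "TN (Atom p) x \<in> B \<Longrightarrow> FN (Atom p) x \<in> B \<Longrightarrow> False" using h by (auto simp: hint_def)
  then show ?case by (auto simp: Val_def inW_def rw_def dest: node_in)
next
  case (Neg \<phi>)
  show ?case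
  proof (intro conjI impI)
    assume "TN (Neg \<phi>) x \<in> B"
    hence "FN \<phi> (bar x) \<in> B" using hint_appl[OF h, of "TNeg \<phi> x"] by simp
    thus "f B (Neg \<phi>) (enc x)" using Neg[of "bar x"] by (simp add: stw_def)
  next
    assume "FN (Neg \<phi>) x \<in> B"
    hence "TN \<phi> (bar x) \<in> B" using hint_appl[OF h, of "FNeg \<phi> x"] by simp
    thus "\<not> f B (Neg \<phi>) (enc x)" using Neg[of "bar x"] by (simp add: stw_def)
  qed
next
  case (Conj \<phi> \<psi>)
  show ?case
  proof (intro conjI impI)
    assume "TN (Conj \<phi> \<psi>) x \<in> B"
    thus "f B (Conj \<phi> \<psi>) (enc x)" using hint_appl[OF h, of "TConj \<phi> \<psi> x"] Conj by simp
  next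
    assume "FN (Conj \<phi> \<psi>) x \<in> B"
    thus "\<not> f B (Conj \<phi> \<psi>) (enc x)" using hint_appl[OF h, of "FConj \<phi> \<psi> x"] Conj by auto
  qed
next
  case (Imp \<phi> \<psi>)
  show ?case
  proof (intro conjI impI)
    assume a: "TN (Imp \<phi> \<psi>) x \<in> B"
    have xl: "x \<in> lbls B" using a by (rule node_in)
    hence rx: "rw B x = x" by (simp add: rw_def)
    show "f B (Imp \<phi> \<psi>) (enc x)"
    proof (simp only: f.simps, intro allI impI)
      fix v u assume r: "Rw B (enc x) v u" and fv: "f B \<phi> v"
      show "f B \<psi> u"
      proof (cases "x = L 0")
        case True
        hence vu: "v = u" "inW B (dec v)" using r rx by (auto simp: Rw_def)
        let ?y = "rw B (dec v)"
        have "?y \<in> lbls B" using vu inW_rw by blast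
        hence "R3 (L 0) ?y ?y \<in> B" using hint_appl[OF h, of "Norm ?y"] by simp
        hence "FN \<phi> ?y \<in> B \<or> TN \<psi> ?y \<in> B" using hint_appl[OF h, of "TImp \<phi> \<psi> x ?y ?y"] a True by simp
        hence "\<not> f B \<phi> (enc ?y) \<or> f B \<psi> (enc ?y)" using Imp.IH by blast
        thus ?thesis using copy[OF vu(2)] fv vu by auto
      next
        case False
        hence "R3 x (dec v) (dec u) \<in> B" using r rx by (auto simp: Rw_def)
        hence "FN \<phi> (dec v) \<in> B \<or> TN \<psi> (dec u) \<in> B" using hint_appl[OF h, of "TImp \<phi> \<psi> x (dec v) (dec u)"] a by simp
        hence "\<not> f B \<phi> (enc (dec v)) \<or> f B \<psi> (enc (dec u))" using Imp.IH by blast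
        thus ?thesis using fv by simp
      qed
    qed
  next
    assume a: "FN (Imp \<phi> \<psi>) x \<in> B"
    have xl: "x \<in> lbls B" using a by (rule node_in)
    hence rx: "rw B x = x" "inW B x" by (auto simp: rw_def inW_def)
    obtain j k where jk: "R3 x (L j) (L k) \<in> B" "TN \<phi> (L j) \<in> B" "FN \<psi> (L k) \<in> B" "x = L 0 \<longrightarrow> j = k"
      using hint_appl[OF h, of "FImp \<phi> \<psi> x"] a by auto
    have "inW B (L j)" using node_in(1)[OF jk(2)] by (simp add: inW_def)
    hence "Rw B (enc x) (enc (L j)) (enc (L k))" using jk rx by (auto simp: Rw_def)
    moreover have "f B \<phi> (enc (L j))" "\<not> f B \<psi> (enc (L k))" using Imp.IH jk by blast+
    ultimately show "\<not> f B (Imp \<phi> \<psi>) (enc x)" by auto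
  qed
next
  case (CImp \<phi> \<psi>)
  show ?case
  proof (intro conjI impI)
    assume a: "TN (CImp \<phi> \<psi>) x \<in> B"
    have xl: "x \<in> lbls B" using a by (rule node_in)
    hence rx: "rw B x = x" by (simp add: rw_def)
    show "f B (CImp \<phi> \<psi>) (enc x)"
    proof (simp only: f.simps, intro allI impI)
      fix v assume "RFw B \<phi> (enc x) v \<or> (v = enc x \<and> inW B (dec (enc x)) \<and> f B \<phi> (enc x))"
      thus "f B \<psi> v"
      proof
        assume "RFw B \<phi> (enc x) v"
        hence "RelF x \<phi> (dec v) \<in> B" using rx by (simp add: RFw_def)
        hence "TN \<psi> (dec v) \<in> B" using hint_appl[OF h, of "TCImp \<phi> \<psi> x (dec v)"] a by simp
        thus ?thesis using CImp.IH[of "dec v"] by simp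
      next
        assume d: "v = enc x \<and> inW B (dec (enc x)) \<and> f B \<phi> (enc x)"
        have "FN \<phi> x \<in> B \<or> (TN \<phi> x \<in> B \<and> RelF x \<phi> x \<in> B)"
          using hint_appl[OF h, of "Cut \<phi> x"] a xl by auto
        moreover have "FN \<phi> x \<notin> B" using CImp.IH d by blast
        ultimately have "RelF x \<phi> x \<in> B" by blast
        hence "TN \<psi> x \<in> B" using hint_appl[OF h, of "TCImp \<phi> \<psi> x x"] a by simp
        thus ?thesis using CImp.IH d by blast
      qed
    qed
  next
    assume a: "FN (CImp \<phi> \<psi>) x \<in> B"
    have xl: "x \<in> lbls B" using a by (rule node_in)
    hence rx: "rw B x = x" "inW B x" by (auto simp: rw_def inW_def)
    obtain j where j: "RelF x \<phi> (L j) \<in> B" "FN \<psi> (L j) \<in> B"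
      using hint_appl[OF h, of "FCImp \<phi> \<psi> x"] a by auto
    have "RFw B \<phi> (enc x) (enc (L j))" using j rx by (simp add: RFw_def)
    moreover have "\<not> f B \<psi> (enc (L j))" using CImp.IH j by blast
    ultimately show "\<not> f B (CImp \<phi> \<psi>) (enc x)" by auto
  qed
next
  case (Just t \<phi>)
  show ?case
  proof (intro conjI impI)
    assume a: "TN (Just t \<phi>) x \<in> B"
    have xl: "x \<in> lbls B" using a by (rule node_in)
    hence rx: "rw B x = x" by (simp add: rw_def)
    show "f B (Just t \<phi>) (enc x)"
    proof (simp only: f.simps, intro allI impI)
      fix v assume "RTw B t (enc x) v"
      hence "RelT x t (dec v) \<in> B" using rx by (simp add: RTw_def)
      hence "TN \<phi> (dec v) \<in> B" using hint_appl[OF h, of "TJust t \<phi> x (dec v)"] a by simp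
      thus "f B \<phi> v" using Just.IH[of "dec v"] by simp
    qed
  next
    assume a: "FN (Just t \<phi>) x \<in> B"
    have xl: "x \<in> lbls B" using a by (rule node_in)
    hence rx: "rw B x = x" "inW B x" by (auto simp: rw_def inW_def)
    obtain j where j: "RelT x t (L j) \<in> B" "FN \<phi> (L j) \<in> B"
      using hint_appl[OF h, of "FJust t \<phi> x"] a by auto
    have "RTw B t (enc x) (enc (L j))" using j rx by (simp add: RTw_def)
    moreover have "\<not> f B \<phi> (enc (L j))" using Just.IH j by blast
    ultimately show "\<not> f B (Just t \<phi>) (enc x)" by auto
  qed
qed


lemma node_lbls_sub: "n \<in> B \<Longrightarrow> y \<in> node_lbls n \<Longrightarrow> inW B y"
  by (auto simp: inW_def intro: in_lbls)

lemma mdl_jrc: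
  assumes h: "hint B"
  shows "jrc_model (mdl B)"
proof -
  have L0: "L 0 \<in> lbls B" using h by (simp add: hint_def)
  have r0: "rw B (L 0) = L 0" using L0 by (simp add: rw_def)
  have a1: "W (mdl B) \<noteq> {}" using L0 by (auto simp: mdl_def inW_def intro!: exI[of _ "enc (L 0)"])
  have a2: "WN (mdl B) \<subseteq> W (mdl B)" using L0 by (auto simp: mdl_def inW_def)
  have a3: "WN (mdl B) \<noteq> {}" by (simp add: mdl_def)
  have a4: "\<forall>w v u. R (mdl B) w v u \<longrightarrow> w \<in> W (mdl B) \<and> v \<in> W (mdl B) \<and> u \<in> W (mdl B)"
  proof (intro allI impI)
    fix w v u assume "R (mdl B) w v u"
    hence r: "Rw B w v u" by (simp add: mdl_def)
    show "w \<in> W (mdl B) \<and> v \<in> W (mdl B) \<and> u \<in> W (mdl B)"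
    proof (cases "rw B (dec w) = L 0")
      case True thus ?thesis using r by (auto simp: mdl_def Rw_def)
    next
      case False
      hence "R3 (rw B (dec w)) (dec v) (dec u) \<in> B" "inW B (dec w)" using r by (auto simp: Rw_def)
      thus ?thesis using node_lbls_sub[of "R3 (rw B (dec w)) (dec v) (dec u)" B] by (auto simp: mdl_def)
    qed
  qed
  have a5: "\<forall>w\<in>WN (mdl B). \<forall>v\<in>W (mdl B). \<forall>u\<in>W (mdl B). R (mdl B) w v u \<longleftrightarrow> v = u"
    using L0 r0 by (auto simp: mdl_def Rw_def inW_def)
  have a6: "\<forall>\<phi> w v. RF (mdl B) \<phi> w v \<longrightarrow> w \<in> W (mdl B) \<and> v \<in> W (mdl B)"
  proof (intro allI impI)
    fix \<phi> w v assume "RF (mdl B) \<phi> w v"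
    thus "w \<in> W (mdl B) \<and> v \<in> W (mdl B)"
      using node_lbls_sub[of "RelF (rw B (dec w)) \<phi> (dec v)" B] by (auto simp: mdl_def RFw_def)
  qed
  have a7: "\<forall>t w v. RT (mdl B) t w v \<longrightarrow> w \<in> W (mdl B) \<and> v \<in> W (mdl B)"
  proof (intro allI impI)
    fix t w v assume "RT (mdl B) t w v"
    thus "w \<in> W (mdl B) \<and> v \<in> W (mdl B)"
      using node_lbls_sub[of "RelT (rw B (dec w)) t (dec v)" B] by (auto simp: mdl_def RTw_def)
  qed
  have a8: "\<forall>w\<in>W (mdl B). st (mdl B) w \<in> W (mdl B) \<and> st (mdl B) (st (mdl B) w) = w"
    by (auto simp: mdl_def stw_def inW_def)
  have a9: "\<forall>p. V (mdl B) p \<subseteq> W (mdl B)" by (auto simp: mdl_def Val_def)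
  have routley: "routley_model (mdl B)"
    unfolding routley_model_def using a1 a2 a3 a4 a5 a6 a7 a8 a9 by blast
  have c1: "\<forall>w\<in>WN (mdl B). \<forall>\<phi> v. RF (mdl B) \<phi> w v \<longrightarrow> sat (mdl B) v \<phi>"
  proof (intro ballI allI impI)
    fix w \<phi> v assume w: "w \<in> WN (mdl B)" and rf: "RF (mdl B) \<phi> w v"
    hence w0: "w = enc (L 0)" by (simp add: mdl_def)
    show "sat (mdl B) v \<phi>"
    proof (cases "RFw B \<phi> w v")
      case True
      hence "RelF (L 0) \<phi> (dec v) \<in> B" using w0 r0 by (simp add: RFw_def)
      hence "TN \<phi> (dec v) \<in> B" using h by (auto simp: hint_def Inv_def)
      thus ?thesis using truth[OF h, of \<phi> "dec v"] by (simp add: sat_mdl)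
    next
      case False
      hence "v = w \<and> f B \<phi> w" using rf by (simp add: mdl_def)
      thus ?thesis by (simp add: sat_mdl)
    qed
  qed
  have c2: "\<forall>w\<in>W (mdl B). \<forall>\<phi>. sat (mdl B) w \<phi> \<longrightarrow> RF (mdl B) \<phi> w w"
    unfolding sat_mdl by (auto simp: mdl_def)
  have c3: "\<forall>s t w v. RT (mdl B) (Plus s t) w v \<longrightarrow> RT (mdl B) s w v \<and> RT (mdl B) t w v"
  proof (intro allI impI)
    fix s t w v assume "RT (mdl B) (Plus s t) w v"
    hence a: "inW B (dec w)" "RelT (rw B (dec w)) (Plus s t) (dec v) \<in> B" by (auto simp: mdl_def RTw_def)
    hence "RelT (rw B (dec w)) s (dec v) \<in> B \<and> RelT (rw B (dec w)) t (dec v) \<in> B"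
      using hint_appl[OF h, of "RPlus (rw B (dec w)) s t (dec v)"] by simp
    thus "RT (mdl B) s w v \<and> RT (mdl B) t w v" using a by (simp add: mdl_def RTw_def)
  qed
  show ?thesis unfolding jrc_model_def using routley c1 c2 c3 by blast
qed

theorem mainTheorem18:
  fixes T :: "fm set" and \<phi> :: fm
  assumes "finite T"
    and "entails T \<phi>"
  shows "derives T \<phi>"
proof (rule ccontr)
  assume nd: "\<not> derives T \<phi>"
  define B0 where "B0 = (\<lambda>\<psi>. TN \<psi> (L 0)) ` T \<union> {FN \<phi> (L 0)}"
  have ok: "ok B0" using nd assms(1) unfolding ok_def derives_def B0_def Inv_def by auto
  have l0: "L 0 \<in> lbls B0" unfolding B0_def by (auto intro: in_lbls[of "FN \<phi> (L 0)"])
  define B where "B = lim B0"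
  have h: "hint B" unfolding B_def by (rule lim_hint[OF ok l0])
  have sub: "B0 \<subseteq> B" unfolding B_def by (rule lim_sup)
  have jm: "jrc_model (mdl B)" by (rule mdl_jrc[OF h])
  have w0: "enc (L 0) \<in> WN (mdl B)" by (simp add: mdl_def)
  have "\<forall>\<psi>\<in>T. sat (mdl B) (enc (L 0)) \<psi>"
    using truth[OF h] sub unfolding B0_def sat_mdl by blast
  hence "sat (mdl B) (enc (L 0)) \<phi>" using assms(2) jm w0 unfolding entails_def by blast
  moreover have "\<not> sat (mdl B) (enc (L 0)) \<phi>"
    using truth[OF h] sub unfolding B0_def sat_mdl by blast
  ultimately show False by blast
qed

end
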